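(* Fix $\theta^* \in \mathbb{R}^n$ and let $\mathcal{T} \subseteq \mathbb{R}^n$ be a nonempty closed convex set such that the re-centered set $\{\theta - \Pi_{\mathcal{T}}(\theta^* ) : \theta \in \mathcal{T}\}$ is a polyhedral cone. Then there exists $r > 0$ such that $$\Pi_{\mathcal{T}}(u) - \Pi_{\mathcal{T}}(\theta^* ) \in (\theta^* - \Pi_{\mathcal{T}}(\theta^* ))^\perp \quad \text{for all } u \in B_r(\theta^* ).$$
   Context: $\Pi_{\mathcal{T}}$ is Euclidean projection onto $\mathcal{T}$; $B_r(x)$ is the closed Euclidean ball of radius $r$ about $x$; $v^\perp = \{w : \langle w, v\rangle = 0\}$. A polyhedral cone is a set $\{x : Ax \le 0\}$ for some matrix $A$. *)

theory Defs
  imports "HOL-Analysis.Analysis"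
begin

(* A polyhedral cone {x. A x <= 0}: the rows of A are given as a finite list of vectors. *)
definition polyhedral_cone :: "(real ^ 'n) set \<Rightarrow> bool" where
  "polyhedral_cone C \<longleftrightarrow> (\<exists>rows :: (real ^ 'n) list. C = {x. \<forall>a \<in> set rows. a \<bullet> x \<le> 0})"

(* Euclidean projection onto T is the library's closest_point T. *)

end

theory Submission
  imports Defs
begin

lemma cp_char:
  fixes S :: "'a::euclidean_space set"
  assumes "convex S" "closed S" "x \<in> S" "\<forall>y\<in>S. (a - x) \<bullet> (y - x) \<le> 0"
  shows "x = closest_point S a"
proof (rule closest_point_unique[OF assms(1-3)], intro ballI)
  fix z assume z: "z \<in> S"
  have "(dist a z)^2 = (norm ((a - x) - (z - x)))^2" by (simp add: dist_norm)
  also have "\<dots> = (norm (a - x))^2 - 2 * ((a - x) \<bullet> (z - x)) + (norm (z - x))^2"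
    by (simp add: power2_norm_eq_inner inner_diff_left inner_diff_right inner_commute)
  also have "\<dots> \<ge> (norm (a - x))^2" using assms(4) z
    by (smt (verit, best) zero_le_power2)
  finally have "(dist a x)^2 \<le> (dist a z)^2" by (simp add: dist_norm)
  then show "dist a x \<le> dist a z" by (simp add: power2_le_iff_abs_le)
qed

theorem lemma4:
  fixes \<theta>s :: "real ^ 'n" and T :: "(real ^ 'n) set"
  assumes "T \<noteq> {}" and "closed T" and "convex T"
    and "polyhedral_cone ((\<lambda>\<theta>. \<theta> - closest_point T \<theta>s) ` T)"
  shows "\<exists>r > 0. \<forall>u \<in> cball \<theta>s r.
           (closest_point T u - closest_point T \<theta>s) \<bullet> (\<theta>s - closest_point T \<theta>s) = 0"
proof -
  define p where "p = closest_point T \<theta>s"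
  obtain rows :: "(real ^ 'n) list" where C: "(\<lambda>\<theta>. \<theta> - p) ` T = {x. \<forall>a \<in> set rows. a \<bullet> x \<le> 0}"
    using assms(4) unfolding polyhedral_cone_def p_def by blast
  have Tchar: "y \<in> T \<longleftrightarrow> (\<forall>a\<in>set rows. a \<bullet> (y - p) \<le> 0)" for y
  proof
    assume "y \<in> T" then have "y - p \<in> (\<lambda>\<theta>. \<theta> - p) ` T" by blast
    then show "\<forall>a\<in>set rows. a \<bullet> (y - p) \<le> 0" using C by blast
  next
    assume "\<forall>a\<in>set rows. a \<bullet> (y - p) \<le> 0"
    then have "y - p \<in> (\<lambda>\<theta>. \<theta> - p) ` T" using C by blast
    then show "y \<in> T" by auto
  qed
  define M where "M J = {y. \<forall>a\<in>J. a \<bullet> (y - p) = 0}" for J :: "(real ^ 'n) set"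
  have Mclosed: "closed (M J)" for J
  proof -
    have "M J = (\<Inter>a\<in>J. {y. a \<bullet> y = a \<bullet> p})" unfolding M_def by (auto simp: inner_diff_right)
    then show ?thesis by (auto intro!: closed_INT closed_hyperplane)
  qed
  have Mconvex: "convex (M J)" for J
  proof -
    have "M J = (\<Inter>a\<in>J. {y. a \<bullet> y = a \<bullet> p})" unfolding M_def by (auto simp: inner_diff_right)
    then show ?thesis by (auto intro!: convex_INT convex_hyperplane)
  qed
  have pM: "p \<in> M J" for J unfolding M_def by simp
  have key: "closest_point T u = closest_point (M {a\<in>set rows. a \<bullet> (closest_point T u - p) = 0}) u" for u
  proof -
    define q where "q = closest_point T u"
    define J where "J = {a\<in>set rows. a \<bullet> (q - p) = 0}"
    have qT: "q \<in> T" unfolding q_def using assms(1,2) closest_point_in_set by blast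
    have qM: "q \<in> M J" unfolding M_def J_def by simp
    have "\<forall>y\<in>M J. (u - q) \<bullet> (y - q) \<le> 0"
    proof
      fix y assume y: "y \<in> M J"
      have ev: "\<forall>\<^sub>F t in at_right 0. a \<bullet> (q - p) + t * (a \<bullet> (y - q)) \<le> 0" if a: "a \<in> set rows" for a
      proof (cases "a \<in> J")
        case True
        then have "a \<bullet> (y - q) = 0" using y unfolding M_def J_def
          by (auto simp: inner_diff_right)
        then show ?thesis using True unfolding J_def by simp
      next
        case False
        then have neg: "a \<bullet> (q - p) < 0" using Tchar qT a unfolding J_def by force
        have "((\<lambda>t. a \<bullet> (q - p) + t * (a \<bullet> (y - q))) \<longlongrightarrow> a \<bullet> (q - p) + 0 * (a \<bullet> (y - q))) (at_right 0)"
          by (intro tendsto_intros)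
        then have "\<forall>\<^sub>F t in at_right 0. a \<bullet> (q - p) + t * (a \<bullet> (y - q)) < 0"
          using neg by (intro order_tendstoD(2)) auto
        then show ?thesis by (rule eventually_mono) simp
      qed
      have "\<forall>\<^sub>F t in at_right 0. \<forall>a\<in>set rows. a \<bullet> (q - p) + t * (a \<bullet> (y - q)) \<le> 0"
        using ev by (simp add: eventually_ball_finite)
      then obtain b where b: "b > 0" "\<And>t. t > 0 \<Longrightarrow> t < b \<Longrightarrow> \<forall>a\<in>set rows. a \<bullet> (q - p) + t * (a \<bullet> (y - q)) \<le> 0"
        unfolding eventually_at_right_field by auto
      define t where "t = b / 2"
      have t: "t > 0" "t < b" using b unfolding t_def by auto
      have "q + t *\<^sub>R (y - q) \<in> T"
        unfolding Tchar using b(2)[OF t]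
        by (simp add: inner_diff_right inner_add_right algebra_simps)
      then have "(u - q) \<bullet> (q + t *\<^sub>R (y - q) - q) \<le> 0"
        unfolding q_def using closest_point_dot[OF assms(3,2)] by blast
      then have "t * ((u - q) \<bullet> (y - q)) \<le> 0" by simp
      then show "(u - q) \<bullet> (y - q) \<le> 0" using t(1) by (simp add: mult_le_0_iff)
    qed
    then show ?thesis using cp_char[OF Mconvex Mclosed qM] unfolding q_def J_def by simp
  qed
  define Bad where "Bad = {J. J \<subseteq> set rows \<and> closest_point (M J) \<theta>s \<noteq> p}"
  have finBad: "finite Bad" unfolding Bad_def by auto
  define d where "d = Min (insert 1 ((\<lambda>J. dist (closest_point (M J) \<theta>s) p) ` Bad))"
  have dpos: "d > 0" unfolding d_def using finBad by (auto simp: Bad_def)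
  have dle: "d \<le> dist (closest_point (M J) \<theta>s) p" if "J \<in> Bad" for J
    unfolding d_def using finBad that by (intro Min_le) auto
  show ?thesis
  proof (intro exI[of _ "d/3"] conjI ballI)
    show "d / 3 > 0" using dpos by simp
    fix u assume u: "u \<in> cball \<theta>s (d/3)"
    define q where "q = closest_point T u"
    define J where "J = {a\<in>set rows. a \<bullet> (q - p) = 0}"
    have qk: "q = closest_point (M J) u" using key[of u] unfolding q_def J_def by simp
    have d1: "dist q p \<le> d/3" unfolding q_def p_def
      using closest_point_lipschitz[OF assms(3,2,1), of u \<theta>s] u by (simp add: dist_commute)
    have d2: "dist q (closest_point (M J) \<theta>s) \<le> d/3" unfolding qk
      using closest_point_lipschitz[OF Mconvex Mclosed, of J u \<theta>s] pM[of J] u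
      by (force simp: dist_commute)
    have "J \<notin> Bad"
    proof
      assume "J \<in> Bad"
      then have "d \<le> dist (closest_point (M J) \<theta>s) p" by (rule dle)
      also have "\<dots> \<le> dist q (closest_point (M J) \<theta>s) + dist q p" by (rule dist_triangle3)
      finally show False using d1 d2 dpos by simp
    qed
    then have cpJ: "closest_point (M J) \<theta>s = p" unfolding Bad_def J_def by auto
    have qMJ: "q \<in> M J" unfolding M_def J_def by simp
    have q'MJ: "2 *\<^sub>R p - q \<in> M J" unfolding M_def J_def
      by (auto simp: inner_diff_right algebra_simps)
    have i1: "(\<theta>s - p) \<bullet> (q - p) \<le> 0"
      using closest_point_dot[OF Mconvex Mclosed qMJ, of \<theta>s] cpJ by simp
    have i2: "(\<theta>s - p) \<bullet> (2 *\<^sub>R p - q - p) \<le> 0"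
      using closest_point_dot[OF Mconvex Mclosed q'MJ, of \<theta>s] cpJ by simp
    have "2 *\<^sub>R p - q - p = -(q - p)" by (simp add: algebra_simps scaleR_2)
    with i2 have "(\<theta>s - p) \<bullet> (p - q) \<le> 0" by simp
    moreover have "(\<theta>s - p) \<bullet> (p - q) = - ((\<theta>s - p) \<bullet> (q - p))"
      by (simp add: inner_diff_right)
    ultimately have "(\<theta>s - p) \<bullet> (q - p) = 0" using i1 by linarith
    then show "(closest_point T u - closest_point T \<theta>s) \<bullet> (\<theta>s - closest_point T \<theta>s) = 0"
      unfolding q_def p_def by (simp add: inner_commute)
  qed
qed

end
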